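(* Let $n=n_1+\dots+n_k$ be a partition of $n$ into positive integers, let $G=U(n)$, and let $L=U(n_1)\times\cdots\times U(n_k)$ and $H=U(1)\times U(n-1)$ be the natural block-diagonal subgroups of $G$. For $1\le i\le k-1$ set $X_i:=-E_{1,\,n_1+\dots+n_i+1}+E_{n_1+\dots+n_i+1,\,1}$ and $B_i:=\exp(\mathbb{R}X_i)\simeq\mathbb{T}$, and let $B:=B_1B_2\cdots B_{k-1}=\{b_1\cdots b_{k-1}:b_i\in B_i\}\subset O(n)$. Then $G=LBH$.
   Context: $E_{ij}$ denotes the $n\times n$ matrix unit with $1$ in position $(i,j)$ and $0$ elsewhere; $\mathbb{T}$ is the circle group. $LBH=\{xbh:x\in L,b\in B,h\in H\}$. *)

theory Defs
  imports Complex_Main "Jordan_Normal_Form.Matrix"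
begin

text \<open>Matrices are 0-indexed n x n complex matrices (Jordan_Normal_Form).
  The paper's 1-based index r corresponds to index r - 1 here.\<close>

definition conj_transpose :: "complex mat \<Rightarrow> complex mat" where
  "conj_transpose A = mat (dim_col A) (dim_row A) (\<lambda>(i,j). cnj (A $$ (j,i)))"

definition unitary_group :: "nat \<Rightarrow> complex mat set" where
  "unitary_group n = {A \<in> carrier_mat n n. A * conj_transpose A = 1\<^sub>m n}"

definition mat_exp :: "nat \<Rightarrow> complex mat \<Rightarrow> complex mat" where
  "mat_exp n A = mat n n (\<lambda>(i,j). \<Sum>m. (A ^\<^sub>m m) $$ (i,j) / of_nat (fact m))"

definition mat_unit :: "nat \<Rightarrow> nat \<Rightarrow> nat \<Rightarrow> complex mat" where
  "mat_unit n i j = mat n n (\<lambda>(a,b). if a = i \<and> b = j then 1 else 0)"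

definition psum :: "nat list \<Rightarrow> nat \<Rightarrow> nat" where
  "psum ns i = sum_list (take i ns)"

definition block_of :: "nat list \<Rightarrow> nat \<Rightarrow> nat" where
  "block_of ns a = (LEAST l. a < psum ns (Suc l))"

definition L_group :: "nat list \<Rightarrow> complex mat set" where
  "L_group ns = {A \<in> unitary_group (sum_list ns).
     \<forall>a < sum_list ns. \<forall>b < sum_list ns. block_of ns a \<noteq> block_of ns b \<longrightarrow> A $$ (a,b) = 0}"

definition H_group :: "nat \<Rightarrow> complex mat set" where
  "H_group n = {A \<in> unitary_group n. \<forall>b < n. 0 < b \<longrightarrow> A $$ (0,b) = 0 \<and> A $$ (b,0) = 0}"

text \<open>X_i = -E_{1, n_1+...+n_i+1} + E_{n_1+...+n_i+1, 1} (1-based), i.e. 0-based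
  positions (0, psum ns i) and (psum ns i, 0).\<close>
definition X_gen :: "nat list \<Rightarrow> nat \<Rightarrow> complex mat" where
  "X_gen ns i = - mat_unit (sum_list ns) 0 (psum ns i) + mat_unit (sum_list ns) (psum ns i) 0"

definition B_i :: "nat list \<Rightarrow> nat \<Rightarrow> complex mat set" where
  "B_i ns i = {mat_exp (sum_list ns) (complex_of_real t \<cdot>\<^sub>m X_gen ns i) | t. True}"

definition B_set :: "nat list \<Rightarrow> complex mat set" where
  "B_set ns = {foldr (\<lambda>i acc. b i * acc) [1..<length ns] (1\<^sub>m (sum_list ns)) | b.
                  \<forall>i \<in> {1..<length ns}. b i \<in> B_i ns i}"

end

theory Submission imports Defs "Jordan_Normal_Form.Determinant" begin

lemma mult_entry:
  assumes "A \<in> carrier_mat n n" "B \<in> carrier_mat n n" "i < n" "j < n"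
  shows "(A * B) $$ (i,j) = (\<Sum>k\<in>{0..<n}. A $$ (i,k) * B $$ (k,j))"
  using assms by (auto simp: scalar_prod_def intro!: sum.cong)

lemma sum_delta_l: "(a::nat) < n \<Longrightarrow> (\<Sum>k\<in>{0..<n}. (if a = k then 1 else 0) * (g k :: 'a::comm_ring_1)) = g a"
proof -
  assume "a < n"
  have "(\<Sum>k\<in>{0..<n}. (if a = k then 1 else 0) * g k) = (\<Sum>k\<in>{0..<n}. if a = k then g a else 0)"
    by (rule sum.cong) auto
  then show ?thesis using \<open>a < n\<close> by simp
qed

lemma sum_delta_r: "(c::nat) < n \<Longrightarrow> (\<Sum>k\<in>{0..<n}. (g k :: 'a::comm_ring_1) * (if k = c then 1 else 0)) = g c"
proof -
  assume "c < n"
  have "(\<Sum>k\<in>{0..<n}. g k * (if k = c then 1 else 0)) = (\<Sum>k\<in>{0..<n}. if c = k then g c else 0)"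
    by (rule sum.cong) auto
  then show ?thesis using \<open>c < n\<close> by simp
qed

lemma ct_carrier[simp]: "A \<in> carrier_mat n m \<Longrightarrow> conj_transpose A \<in> carrier_mat m n"
  by (auto simp: conj_transpose_def)

lemma ct_dims[simp]: "dim_row (conj_transpose A) = dim_col A" "dim_col (conj_transpose A) = dim_row A"
  by (auto simp: conj_transpose_def)

lemma ct_index[simp]: "i < dim_col A \<Longrightarrow> j < dim_row A \<Longrightarrow> conj_transpose A $$ (i,j) = cnj (A $$ (j,i))"
  by (auto simp: conj_transpose_def)

lemma ct_ct[simp]: "conj_transpose (conj_transpose A) = A"
  by (rule eq_matI) auto

lemma ct_mult: assumes "A \<in> carrier_mat n n" "B \<in> carrier_mat n n"
  shows "conj_transpose (A * B) = conj_transpose B * conj_transpose A"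
proof (rule eq_matI)
  fix i j assume "i < dim_row (conj_transpose B * conj_transpose A)" "j < dim_col (conj_transpose B * conj_transpose A)"
  then have ij: "i < n" "j < n" using assms by auto
  show "conj_transpose (A * B) $$ (i, j) = (conj_transpose B * conj_transpose A) $$ (i, j)"
  proof -
    have "conj_transpose (A * B) $$ (i, j) = cnj ((A*B) $$ (j,i))" using assms ij by simp
    also have "\<dots> = cnj (\<Sum>k\<in>{0..<n}. A $$ (j,k) * B $$ (k,i))" using assms ij by (simp only: mult_entry)
    also have "\<dots> = (\<Sum>k\<in>{0..<n}. conj_transpose B $$ (i,k) * conj_transpose A $$ (k,j))"
      using assms ij by (auto simp: mult.commute intro!: sum.cong)
    also have "\<dots> = (conj_transpose B * conj_transpose A) $$ (i, j)"
      using assms ij by (subst mult_entry[of _ n]) auto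
    finally show ?thesis .
  qed
qed (use assms in auto)

lemma ct_one[simp]: "conj_transpose (1\<^sub>m n) = 1\<^sub>m n"
  by (rule eq_matI) auto

lemma unitary_carrier: "A \<in> unitary_group n \<Longrightarrow> A \<in> carrier_mat n n"
  by (auto simp: unitary_group_def)

lemma unitary_left: "A \<in> unitary_group n \<Longrightarrow> conj_transpose A * A = 1\<^sub>m n"
  by (rule mat_mult_left_right_inverse[of A n]) (auto simp: unitary_group_def)

lemma unitary_ct: "A \<in> unitary_group n \<Longrightarrow> conj_transpose A \<in> unitary_group n"
  using unitary_left[of A n] by (auto simp: unitary_group_def)

lemma unitary_one: "1\<^sub>m n \<in> unitary_group n"
  by (auto simp: unitary_group_def)

lemma unitary_mult: assumes "A \<in> unitary_group n" "B \<in> unitary_group n"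
  shows "A * B \<in> unitary_group n"
proof -
  have c: "A \<in> carrier_mat n n" "B \<in> carrier_mat n n" using assms by (auto simp: unitary_group_def)
  have cc: "conj_transpose A \<in> carrier_mat n n" "conj_transpose B \<in> carrier_mat n n" using c by auto
  have "A * B * conj_transpose (A * B) = A * B * (conj_transpose B * conj_transpose A)"
    using c by (simp add: ct_mult)
  also have "\<dots> = A * (B * (conj_transpose B * conj_transpose A))"
    using c cc by (rule_tac assoc_mult_mat) auto
  also have "B * (conj_transpose B * conj_transpose A) = (B * conj_transpose B) * conj_transpose A"
    using c cc by (rule_tac assoc_mult_mat[symmetric]) auto
  also have "A * ((B * conj_transpose B) * conj_transpose A) = A * (B * conj_transpose B) * conj_transpose A"
    using c cc by (rule_tac assoc_mult_mat[symmetric]) auto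
  also have "\<dots> = 1\<^sub>m n" using assms c by (simp add: unitary_group_def)
  finally show ?thesis using c by (simp add: unitary_group_def)
qed


definition dg :: "nat list \<Rightarrow> (nat \<Rightarrow> complex) \<Rightarrow> complex mat" where
  "dg ns \<omega> = mat (sum_list ns) (sum_list ns) (\<lambda>(a,c). if a = c then \<omega> (block_of ns a) else 0)"

definition Nb :: "nat list \<Rightarrow> (nat \<Rightarrow> complex) \<Rightarrow> nat \<Rightarrow> complex" where
  "Nb ns w j = (\<Sum>k\<in>{0..<sum_list ns}. if block_of ns k = j then cnj (w k) * w k else 0)"

definition Qm :: "nat list \<Rightarrow> (nat \<Rightarrow> complex) \<Rightarrow> nat \<Rightarrow> nat \<Rightarrow> complex" where
  "Qm ns w a c = (if block_of ns a = block_of ns c \<and> Nb ns w (block_of ns a) \<noteq> 0 then 2 * w a * cnj (w c) / Nb ns w (block_of ns a) else 0)"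

definition hh :: "nat list \<Rightarrow> (nat \<Rightarrow> complex) \<Rightarrow> complex mat" where
  "hh ns w = mat (sum_list ns) (sum_list ns) (\<lambda>(a,c). (if a = c then 1 else 0) - Qm ns w a c)"

locale part =
  fixes ns :: "nat list"
  assumes ne: "ns \<noteq> []" and pos: "\<forall>m \<in> set ns. 0 < m"
begin

abbreviation "n \<equiv> sum_list ns"
abbreviation "K \<equiv> length ns"
abbreviation "blk \<equiv> block_of ns"
abbreviation "p \<equiv> psum ns"

lemma psum_Suc: "i < K \<Longrightarrow> p (Suc i) = p i + ns ! i"
  by (simp add: psum_def take_Suc_conv_app_nth)

lemma psum_ge: "K \<le> i \<Longrightarrow> p i = n"
  by (simp add: psum_def)

lemma psum_0[simp]: "p 0 = 0" by (simp add: psum_def)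

lemma psum_le_Suc: "p i \<le> p (Suc i)"
  by (cases "i < K") (auto simp: psum_Suc psum_ge)

lemma psum_mono: "i \<le> j \<Longrightarrow> p i \<le> p j"
  by (induction j rule: dec_induct) (auto intro: le_trans psum_le_Suc)

lemma psum_lt_Suc: "i < K \<Longrightarrow> p i < p (Suc i)"
  using pos by (auto simp: psum_Suc)

lemma psum_strict: "i < j \<Longrightarrow> j \<le> K \<Longrightarrow> p i < p j"
  using psum_lt_Suc[of i] psum_mono[of "Suc i" j] by auto

lemma psum_lt_n: "i < K \<Longrightarrow> p i < n"
  using psum_strict[of i K] psum_ge[of K] by auto

lemma psum_pos: "0 < i \<Longrightarrow> i < K \<Longrightarrow> 0 < p i"
  using psum_strict[of 0 i] by auto

lemma psum_inj: "i < K \<Longrightarrow> j < K \<Longrightarrow> p i = p j \<Longrightarrow> i = j"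
  using psum_strict[of i j] psum_strict[of j i] by (cases i j rule: linorder_cases) auto

lemma blk_props: assumes "a < n"
  shows "blk a < K" "p (blk a) \<le> a" "a < p (Suc (blk a))"
proof -
  have ex: "a < p (Suc (K - 1))" using assms ne psum_ge[of "Suc (K-1)"] by auto
  show "a < p (Suc (blk a))" unfolding block_of_def by (rule LeastI[of "\<lambda>l. a < p (Suc l)", OF ex])
  have "blk a \<le> K - 1" unfolding block_of_def by (rule Least_le[of "\<lambda>l. a < p (Suc l)", OF ex])
  then show "blk a < K" using ne by (cases ns) auto
  show "p (blk a) \<le> a"
  proof (cases "blk a")
    case (Suc l)
    have "\<not> a < p (Suc l)" using Suc unfolding block_of_def by (rule_tac not_less_Least) auto
    then show ?thesis using Suc by simp
  qed simp
qed

lemma blk_unique: assumes "p j \<le> a" "a < p (Suc j)" shows "blk a = j"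
proof -
  have "blk a \<le> j" unfolding block_of_def by (rule Least_le) (use assms in auto)
  moreover have "\<not> blk a < j"
  proof
    assume "blk a < j"
    have "a < p (Suc (blk a))" unfolding block_of_def by (rule LeastI) (use assms in auto)
    moreover have "p (Suc (blk a)) \<le> p j" using \<open>blk a < j\<close> by (intro psum_mono) auto
    ultimately show False using assms by auto
  qed
  ultimately show ?thesis by auto
qed

lemma blk_psum: "j < K \<Longrightarrow> blk (p j) = j"
  using psum_lt_Suc by (intro blk_unique) auto

lemma blk_0[simp]: "blk 0 = 0"
  using blk_psum[of 0] ne by auto


lemma L_unitary: "A \<in> L_group ns \<Longrightarrow> A \<in> unitary_group n"
  by (simp add: L_group_def)

lemma L_mult: assumes "A \<in> L_group ns" "B \<in> L_group ns" shows "A * B \<in> L_group ns"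
proof -
  have c: "A \<in> carrier_mat n n" "B \<in> carrier_mat n n" using assms by (auto simp: L_group_def unitary_group_def)
  have "(A * B) $$ (a,c) = 0" if "a < n" "c < n" "blk a \<noteq> blk c" for a c
  proof -
    have "(A * B) $$ (a,c) = (\<Sum>k\<in>{0..<n}. A $$ (a,k) * B $$ (k,c))" using c that by (rule_tac mult_entry) auto
    also have "\<dots> = 0"
    proof (rule sum.neutral, safe)
      fix k assume "k \<in> {0..<n}"
      then show "A $$ (a,k) * B $$ (k,c) = 0" using assms that unfolding L_group_def
        by (cases "blk a = blk k") auto
    qed
    finally show ?thesis .
  qed
  then show ?thesis using assms unitary_mult by (auto simp: L_group_def)
qed

lemma dg_L: assumes "\<And>j. cnj (\<omega> j) * \<omega> j = 1" shows "dg ns \<omega> \<in> L_group ns"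
proof -
  have c: "dg ns \<omega> \<in> carrier_mat n n" by (simp add: dg_def)
  have "dg ns \<omega> * conj_transpose (dg ns \<omega>) = 1\<^sub>m n"
  proof (rule eq_matI)
    fix a c assume ac: "a < dim_row (1\<^sub>m n)" "c < dim_col (1\<^sub>m n)"
    have "(dg ns \<omega> * conj_transpose (dg ns \<omega>)) $$ (a,c) = (\<Sum>k\<in>{0..<n}. dg ns \<omega> $$ (a,k) * conj_transpose (dg ns \<omega>) $$ (k,c))"
      using c ac by (rule_tac mult_entry) auto
    also have "\<dots> = (\<Sum>k\<in>{0..<n}. if k = a then (if a = c then \<omega> (blk a) * cnj (\<omega> (blk a)) else 0) else 0)"
      using ac by (intro sum.cong) (auto simp: dg_def)
    also have "\<dots> = 1\<^sub>m n $$ (a,c)" using ac assms[of "blk a"] by (cases "a = c") (simp_all add: mult.commute)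
    finally show "(dg ns \<omega> * conj_transpose (dg ns \<omega>)) $$ (a,c) = 1\<^sub>m n $$ (a,c)" .
  qed (auto simp: dg_def)
  then show ?thesis using c by (auto simp: L_group_def unitary_group_def dg_def)
qed

lemma Nb_real: "cnj (Nb ns w j) = Nb ns w j"
  unfolding Nb_def by (simp add: cnj_sum if_distrib mult.commute cong: if_cong)

lemma Qm_herm: "cnj (Qm ns w c a) = Qm ns w a c"
  unfolding Qm_def using Nb_real[of w] by (auto simp: mult.commute)

lemma Qm_sq: assumes "a < n" "c < n"
  shows "(\<Sum>k\<in>{0..<n}. Qm ns w a k * Qm ns w k c) = 2 * Qm ns w a c"
proof (cases "blk a = blk c \<and> Nb ns w (blk a) \<noteq> 0")
  case True
  let ?N = "Nb ns w (blk a)"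
  have "(\<Sum>k\<in>{0..<n}. Qm ns w a k * Qm ns w k c) =
      (\<Sum>k\<in>{0..<n}. (4 * w a * cnj (w c) / ?N^2) * (if blk k = blk a then cnj (w k) * w k else 0))"
    using True by (intro sum.cong) (auto simp: Qm_def power2_eq_square)
  also have "\<dots> = (4 * w a * cnj (w c) / ?N^2) * ?N" unfolding Nb_def by (simp add: sum_divide_distrib sum_distrib_left)
  also have "\<dots> = 2 * Qm ns w a c" using True by (simp add: Qm_def power2_eq_square)
  finally show ?thesis .
next
  case False
  then show ?thesis by (auto simp: Qm_def intro!: sum.neutral)
qed

lemma hh_L: "hh ns w \<in> L_group ns"
proof -
  have c: "hh ns w \<in> carrier_mat n n" by (simp add: hh_def)
  have "hh ns w * conj_transpose (hh ns w) = 1\<^sub>m n"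
  proof (rule eq_matI)
    fix a c assume ac: "a < dim_row (1\<^sub>m n)" "c < dim_col (1\<^sub>m n)"
    have "(hh ns w * conj_transpose (hh ns w)) $$ (a,c) = (\<Sum>k\<in>{0..<n}. hh ns w $$ (a,k) * conj_transpose (hh ns w) $$ (k,c))"
      using c ac by (rule_tac mult_entry) auto
    also have "\<dots> = (\<Sum>k\<in>{0..<n}. (if a = k then 1 else 0) * (if k = c then 1 else 0)
        - (if a = k then 1 else 0) * Qm ns w k c - Qm ns w a k * (if k = c then 1 else 0) + Qm ns w a k * Qm ns w k c)"
      using ac by (intro sum.cong) (auto simp: hh_def Qm_herm algebra_simps)
    also have "\<dots> = (if a = c then 1 else 0) - Qm ns w a c - Qm ns w a c + 2 * Qm ns w a c"
      using ac by (simp add: sum.distrib sum_subtractf Qm_sq sum_delta_l sum_delta_r)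
    also have "\<dots> = 1\<^sub>m n $$ (a,c)" using ac by simp
    finally show "(hh ns w * conj_transpose (hh ns w)) $$ (a,c) = 1\<^sub>m n $$ (a,c)" .
  qed (auto simp: hh_def)
  moreover have "hh ns w $$ (a,c) = 0" if "blk a \<noteq> blk c" "a < n" "c < n" for a c
    using that by (auto simp: hh_def Qm_def)
  ultimately show ?thesis using c by (auto simp: L_group_def unitary_group_def)
qed


end

lemma sum_delta_cond: "(q::nat) < n \<Longrightarrow> (\<Sum>k\<in>{0..<n}. (f k :: 'a::comm_ring_1) * (if k = q \<and> P then 1 else 0)) = (if P then f q else 0)"
  using sum_delta_r[of q n f] by (cases P) auto

definition cc :: "nat \<Rightarrow> complex" where "cc m = (if even m then (-1)^(m div 2) else 0)"
definition ss :: "nat \<Rightarrow> complex" where "ss m = (if even m then 0 else (-1)^((m - Suc 0) div 2))"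

lemma ss_Suc: "ss (Suc m) = cc m" by (simp add: ss_def cc_def)
lemma cc_Suc: "cc (Suc m) = - ss m"
proof (cases "even m")
  case True then show ?thesis by (simp add: ss_def cc_def)
next
  case False
  then obtain j where "m = Suc (2*j)" by (metis oddE Suc_eq_plus1)
  then show ?thesis by (simp add: ss_def cc_def)
qed

definition Pw :: "nat list \<Rightarrow> nat \<Rightarrow> real \<Rightarrow> nat \<Rightarrow> complex mat" where
  "Pw ns i t m = mat (sum_list ns) (sum_list ns) (\<lambda>(a,c). complex_of_real t ^ m *
     (if a = c then (if a = 0 \<or> a = psum ns i then cc m else (if m = 0 then 1 else 0))
      else if a = 0 \<and> c = psum ns i then - ss m
      else if a = psum ns i \<and> c = 0 then ss m else 0))"

definition rot :: "nat list \<Rightarrow> nat \<Rightarrow> real \<Rightarrow> complex mat" where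
  "rot ns i t = mat (sum_list ns) (sum_list ns) (\<lambda>(a,c).
     (if a = c then (if a = 0 \<or> a = psum ns i then complex_of_real (cos t) else 1)
      else if a = 0 \<and> c = psum ns i then - complex_of_real (sin t)
      else if a = psum ns i \<and> c = 0 then complex_of_real (sin t) else 0))"

context part begin

lemma X_entry: "k < n \<Longrightarrow> c < n \<Longrightarrow> X_gen ns i $$ (k,c) =
   (if k = p i \<and> c = 0 then 1 else 0) - (if k = 0 \<and> c = p i then 1 else 0)"
  by (simp add: X_gen_def mat_unit_def)

lemma X_dims[simp]: "dim_row (X_gen ns i) = n" "dim_col (X_gen ns i) = n"
  by (simp_all add: X_gen_def mat_unit_def)

lemma X_carrier[simp]: "X_gen ns i \<in> carrier_mat n n"
  by (simp add: X_gen_def mat_unit_def)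

lemma Pw_carrier[simp]: "Pw ns i t m \<in> carrier_mat n n" by (simp add: Pw_def)

lemma Pw_Suc: assumes i: "1 \<le> i" "i < K"
  shows "Pw ns i t (Suc m) = Pw ns i t m * (complex_of_real t \<cdot>\<^sub>m X_gen ns i)"
proof (rule eq_matI)
  have q: "0 < p i" "p i < n" using psum_pos psum_lt_n i by auto
  fix a c assume "a < dim_row (Pw ns i t m * (complex_of_real t \<cdot>\<^sub>m X_gen ns i))"
    "c < dim_col (Pw ns i t m * (complex_of_real t \<cdot>\<^sub>m X_gen ns i))"
  then have ac: "a < n" "c < n" by (auto simp: Pw_def X_gen_def mat_unit_def)
  let ?M = "Pw ns i t m"
  have "(Pw ns i t m * (complex_of_real t \<cdot>\<^sub>m X_gen ns i)) $$ (a,c)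
      = (\<Sum>k\<in>{0..<n}. ?M $$ (a,k) * (complex_of_real t \<cdot>\<^sub>m X_gen ns i) $$ (k,c))"
    using ac by (rule_tac mult_entry) auto
  also have "\<dots> = (\<Sum>k\<in>{0..<n}. complex_of_real t * (?M $$ (a,k) * (if k = p i \<and> c = 0 then 1 else 0))
      - complex_of_real t * (?M $$ (a,k) * (if k = 0 \<and> c = p i then 1 else 0)))"
    using ac by (intro sum.cong) (auto simp: X_entry algebra_simps)
  also have "\<dots> = complex_of_real t * ((if c = 0 then ?M $$ (a, p i) else 0) - (if c = p i then ?M $$ (a, 0) else 0))"
    using q by (simp add: sum_subtractf sum_distrib_left[symmetric] sum_delta_cond right_diff_distrib)
  also have "\<dots> = Pw ns i t (Suc m) $$ (a,c)"
    using ac q by (auto simp: Pw_def cc_Suc ss_Suc)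
  finally show "Pw ns i t (Suc m) $$ (a,c) = (Pw ns i t m * (complex_of_real t \<cdot>\<^sub>m X_gen ns i)) $$ (a,c)" by simp
qed (auto simp: Pw_def)

lemma Pw_pow: assumes "1 \<le> i" "i < K"
  shows "(complex_of_real t \<cdot>\<^sub>m X_gen ns i) ^\<^sub>m m = Pw ns i t m"
proof (induction m)
  case 0
  show ?case by (rule eq_matI) (auto simp: Pw_def cc_def ss_def X_gen_def mat_unit_def)
next
  case (Suc m)
  then show ?case using Pw_Suc[OF assms] by simp
qed

end

lemma cos_ser: "(\<lambda>m. complex_of_real t ^ m * cc m / of_nat (fact m)) sums complex_of_real (cos t)"
proof -
  have "(\<lambda>m. cos_coeff m *\<^sub>R complex_of_real t ^ m) sums cos (complex_of_real t)" by (rule cos_converges)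
  moreover have "(\<lambda>m. cos_coeff m *\<^sub>R complex_of_real t ^ m) = (\<lambda>m. complex_of_real t ^ m * cc m / of_nat (fact m))"
    by (auto simp: cos_coeff_def cc_def scaleR_conv_of_real)
  ultimately show ?thesis by (simp add: cos_of_real)
qed

lemma sin_ser: "(\<lambda>m. complex_of_real t ^ m * ss m / of_nat (fact m)) sums complex_of_real (sin t)"
proof -
  have "(\<lambda>m. sin_coeff m *\<^sub>R complex_of_real t ^ m) sums sin (complex_of_real t)" by (rule sin_converges)
  moreover have "(\<lambda>m. sin_coeff m *\<^sub>R complex_of_real t ^ m) = (\<lambda>m. complex_of_real t ^ m * ss m / of_nat (fact m))"
    by (auto simp: sin_coeff_def ss_def scaleR_conv_of_real)
  ultimately show ?thesis by (simp add: sin_of_real)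
qed

lemma one_ser: "(\<lambda>m. complex_of_real t ^ m * (if m = 0 then 1 else 0) / of_nat (fact m)) sums 1"
proof -
  have "(\<lambda>m. complex_of_real t ^ m * (if m = 0 then 1 else 0) / of_nat (fact m)) = (\<lambda>m. if m = 0 then (\<lambda>_. 1) m else 0)"
    by auto
  then show ?thesis using sums_single[of 0 "\<lambda>_. 1::complex"] by simp
qed

context part begin

lemma exp_rot: assumes "1 \<le> i" "i < K"
  shows "mat_exp n (complex_of_real t \<cdot>\<^sub>m X_gen ns i) = rot ns i t"
proof (rule eq_matI)
  fix a c assume "a < dim_row (rot ns i t)" "c < dim_col (rot ns i t)"
  then have ac: "a < n" "c < n" by (auto simp: rot_def)
  have "mat_exp n (complex_of_real t \<cdot>\<^sub>m X_gen ns i) $$ (a,c) = (\<Sum>m. Pw ns i t m $$ (a,c) / of_nat (fact m))"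
    using ac by (simp add: mat_exp_def Pw_pow[OF assms])
  also have "\<dots> = (\<Sum>m. complex_of_real t ^ m *
     (if a = c then (if a = 0 \<or> a = p i then cc m else (if m = 0 then 1 else 0))
      else if a = 0 \<and> c = p i then - ss m
      else if a = p i \<and> c = 0 then ss m else 0) / of_nat (fact m))"
    using ac by (simp add: Pw_def)
  also have "\<dots> = rot ns i t $$ (a,c)"
  proof -
    have "(\<lambda>m. complex_of_real t ^ m *
     (if a = c then (if a = 0 \<or> a = p i then cc m else (if m = 0 then 1 else 0))
      else if a = 0 \<and> c = p i then - ss m
      else if a = p i \<and> c = 0 then ss m else 0) / of_nat (fact m)) sums rot ns i t $$ (a,c)"
      using ac cos_ser[of t] sin_ser[of t] one_ser[of t] sums_minus[OF sin_ser[of t]]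
      by (auto simp: rot_def)
    then show ?thesis by (rule sums_unique[symmetric])
  qed
  finally show "mat_exp n (complex_of_real t \<cdot>\<^sub>m X_gen ns i) $$ (a,c) = rot ns i t $$ (a,c)" .
qed (auto simp: rot_def mat_exp_def)


lemma sum_two: assumes "(0::nat) < q" "q < n" "\<And>k. k < n \<Longrightarrow> k \<noteq> 0 \<Longrightarrow> k \<noteq> q \<Longrightarrow> f k = 0"
  shows "(\<Sum>k\<in>{0..<n}. f k) = f 0 + (f q :: 'a::comm_monoid_add)"
proof -
  have "(\<Sum>k\<in>{0..<n}. f k) = (\<Sum>k\<in>{0,q}. f k)"
    using assms by (intro sum.mono_neutral_right) auto
  then show ?thesis using assms by simp
qed

lemma rot_unitary: assumes "1 \<le> i" "i < K" shows "rot ns i t \<in> unitary_group n"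
proof -
  have q: "0 < p i" "p i < n" using psum_pos psum_lt_n assms by auto
  have c: "rot ns i t \<in> carrier_mat n n" by (simp add: rot_def)
  let ?R = "rot ns i t"
  have sc: "complex_of_real (cos t) * complex_of_real (cos t) + complex_of_real (sin t) * complex_of_real (sin t) = 1"
    by (metis of_real_add of_real_mult of_real_1 sin_cos_squared_add power2_eq_square add.commute)
  have "?R * conj_transpose ?R = 1\<^sub>m n"
  proof (rule eq_matI)
    fix a c assume "a < dim_row (1\<^sub>m n)" "c < dim_col (1\<^sub>m n)"
    then have ac: "a < n" "c < n" by auto
    have "(?R * conj_transpose ?R) $$ (a,c) = (\<Sum>k\<in>{0..<n}. ?R $$ (a,k) * conj_transpose ?R $$ (k,c))"
      using c ac by (rule_tac mult_entry) auto
    also have "\<dots> = (\<Sum>k\<in>{0..<n}. ?R $$ (a,k) * cnj (?R $$ (c,k)))"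
      using ac by (intro sum.cong) (auto simp: rot_def)
    also have "\<dots> = 1\<^sub>m n $$ (a,c)"
    proof (cases "a \<noteq> 0 \<and> a \<noteq> p i")
      case True
      have "(\<Sum>k\<in>{0..<n}. ?R $$ (a,k) * cnj (?R $$ (c,k))) = (\<Sum>k\<in>{0..<n}. (if a = k then 1 else 0) * cnj (?R $$ (c,k)))"
        using True ac by (intro sum.cong) (auto simp: rot_def)
      also have "\<dots> = cnj (?R $$ (c,a))" using sum_delta_l[of a n "\<lambda>k. cnj (?R $$ (c,k))"] ac by simp
      also have "\<dots> = 1\<^sub>m n $$ (a,c)" using True ac by (auto simp: rot_def)
      finally show ?thesis .
    next
      case False
      show ?thesis
      proof (cases "c \<noteq> 0 \<and> c \<noteq> p i")
        case True
        have "(\<Sum>k\<in>{0..<n}. ?R $$ (a,k) * cnj (?R $$ (c,k))) = (\<Sum>k\<in>{0..<n}. ?R $$ (a,k) * (if k = c then 1 else 0))"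
          using True ac by (intro sum.cong) (auto simp: rot_def)
        also have "\<dots> = ?R $$ (a,c)" using sum_delta_r[of c n "\<lambda>k. ?R $$ (a,k)"] ac by simp
        also have "\<dots> = 1\<^sub>m n $$ (a,c)" using True ac by (auto simp: rot_def)
        finally show ?thesis .
      next
        case False2: False
        have "(\<Sum>k\<in>{0..<n}. ?R $$ (a,k) * cnj (?R $$ (c,k))) = ?R $$ (a,0) * cnj (?R $$ (c,0)) + ?R $$ (a,p i) * cnj (?R $$ (c,p i))"
          using False q ac by (intro sum_two) (auto simp: rot_def)
        also have "\<dots> = 1\<^sub>m n $$ (a,c)" using False False2 q ac sc by (auto simp: rot_def algebra_simps)
        finally show ?thesis .
      qed
    qed
    finally show "(?R * conj_transpose ?R) $$ (a,c) = 1\<^sub>m n $$ (a,c)" .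
  qed (auto simp: rot_def)
  then show ?thesis using c by (simp add: unitary_group_def)
qed


end



lemma angle_ex: assumes "(s::real) \<ge> 0" "s^2 = x^2 + y^2" shows "\<exists>t. cos t * s = x \<and> sin t * s = y"
proof (cases "s = 0")
  case True
  then have "x = 0" "y = 0" using assms by (auto simp: add_nonneg_eq_0_iff)
  then show ?thesis using True by auto
next
  case False
  have "(x/s)^2 + (y/s)^2 = (x^2+y^2)/s^2" by (simp add: power_divide add_divide_distrib)
  also have "\<dots> = 1" using False by (simp add: assms(2)[symmetric])
  finally have "(x/s)^2 + (y/s)^2 = 1" .
  then obtain t where t: "x/s = cos t" "y/s = sin t" using sincos_total_2pi_le by blast
  have "x = cos t * s" using t(1) False by (simp add: divide_eq_eq)
  moreover have "y = sin t * s" using t(2) False by (simp add: divide_eq_eq)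
  ultimately show ?thesis by auto
qed

lemma foldr_carrier: "(\<And>i. i \<in> set xs \<Longrightarrow> b i \<in> carrier_mat n n) \<Longrightarrow> foldr (\<lambda>i acc. b i * acc) xs (1\<^sub>m n) \<in> carrier_mat n n"
  by (induction xs) (auto intro!: mult_carrier_mat)

lemma foldr_unitary: "(\<And>i. i \<in> set xs \<Longrightarrow> b i \<in> unitary_group n) \<Longrightarrow> foldr (\<lambda>i acc. b i * acc) xs (1\<^sub>m n) \<in> unitary_group n"
  by (induction xs) (auto intro: unitary_mult unitary_one)

context part begin

lemma Bi_rot: "1 \<le> i \<Longrightarrow> i < K \<Longrightarrow> A \<in> B_i ns i \<Longrightarrow> \<exists>t. A = rot ns i t"
  using exp_rot by (auto simp: B_i_def)

lemma rot_Bi: "1 \<le> i \<Longrightarrow> i < K \<Longrightarrow> rot ns i t \<in> B_i ns i"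
  using exp_rot[symmetric] by (auto simp: B_i_def)

lemma B_unitary: "A \<in> B_set ns \<Longrightarrow> A \<in> unitary_group n"
  unfolding B_set_def
  using Bi_rot rot_unitary by (force intro!: foldr_unitary)

lemma B_col: fixes r :: "nat \<Rightarrow> real"
  assumes rpos: "\<And>j. r j \<ge> 0" and rsum: "(\<Sum>j<K. r j ^ 2) = 1" and m: "1 \<le> m" "m \<le> K"
  defines "S \<equiv> \<lambda>l. sqrt (\<Sum>j\<le>l. r j ^ 2)"
  shows "\<exists>b. (\<forall>i\<in>{m..<K}. b i \<in> B_i ns i) \<and> (\<forall>a<n. foldr (\<lambda>i acc. b i * acc) [m..<K] (1\<^sub>m n) $$ (a,0) =
     (if a = 0 then complex_of_real (S (m - 1)) else if a = p (blk a) \<and> m \<le> blk a then complex_of_real (r (blk a)) else 0))"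
  using m(2,1)
proof (induction m rule: inc_induct)
  case base
  have "S (K - 1) = 1"
  proof -
    have "{..K-1} = {..<K}" using ne by (cases ns) auto
    then show ?thesis using rsum unfolding S_def by simp
  qed
  have "\<forall>a<n. (1\<^sub>m n) $$ (a,0) = (if a = 0 then complex_of_real (S (K - 1)) else if a = p (blk a) \<and> K \<le> blk a then complex_of_real (r (blk a)) else 0)"
  proof (intro allI impI)
    fix a assume a: "a < n"
    then have "\<not> K \<le> blk a" using blk_props(1) by (simp add: not_le)
    then show "(1\<^sub>m n) $$ (a,0) = (if a = 0 then complex_of_real (S (K - 1)) else if a = p (blk a) \<and> K \<le> blk a then complex_of_real (r (blk a)) else 0)"
      using a \<open>S (K - 1) = 1\<close> by auto
  qed
  then show ?case by (intro exI[of _ "\<lambda>_. 1\<^sub>m n"]) simp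
next
  case (step m)
  then obtain b where bB: "\<forall>i\<in>{Suc m..<K}. b i \<in> B_i ns i" and
    bcol: "\<forall>a<n. foldr (\<lambda>i acc. b i * acc) [Suc m..<K] (1\<^sub>m n) $$ (a,0) =
     (if a = 0 then complex_of_real (S m) else if a = p (blk a) \<and> Suc m \<le> blk a then complex_of_real (r (blk a)) else 0)"
    by auto
  have q: "0 < p m" "p m < n" "blk (p m) = m" using psum_pos psum_lt_n blk_psum step by auto
  have "(S m)^2 = (S (m-1))^2 + (r m)^2"
  proof -
    obtain m' where "m = Suc m'" using step(4) by (cases m) auto
    then have "(\<Sum>j\<le>m. r j ^ 2) = (\<Sum>j\<le>m-1. r j ^ 2) + r m ^ 2" by simp
    then show ?thesis unfolding S_def by (simp add: sum_nonneg)
  qed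
  moreover have "S m \<ge> 0" unfolding S_def by (simp add: sum_nonneg)
  ultimately obtain t where t: "cos t * S m = S (m-1)" "sin t * S m = r m" using angle_ex by metis
  define b' where "b' = b(m := rot ns m t)"
  let ?F = "foldr (\<lambda>i acc. b i * acc) [Suc m..<K] (1\<^sub>m n)"
  let ?R = "rot ns m t"
  have F': "foldr (\<lambda>i acc. b' i * acc) [m..<K] (1\<^sub>m n) = ?R * ?F"
  proof -
    have "foldr (\<lambda>i acc. b' i * acc) [Suc m..<K] (1\<^sub>m n) = ?F"
      by (rule foldr_cong) (auto simp: b'_def)
    moreover have "[m..<K] = m # [Suc m..<K]" using step(2) by (simp add: upt_conv_Cons)
    moreover have "b' m = ?R" by (simp add: b'_def)
    ultimately show ?thesis by (simp only: foldr.simps o_apply)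
  qed
  have bc: "b i \<in> carrier_mat n n" if "i \<in> set [Suc m..<K]" for i
  proof -
    have i: "1 \<le> i" "i < K" "b i \<in> B_i ns i" using that bB step by auto
    then obtain t' where "b i = rot ns i t'" using Bi_rot by blast
    then show ?thesis using rot_unitary[OF i(1,2)] unitary_carrier by simp
  qed
  have Fc: "?F \<in> carrier_mat n n"
    using bc by (rule foldr_carrier)
  have Rc: "?R \<in> carrier_mat n n" by (simp add: rot_def)
  have b'B: "\<forall>i\<in>{m..<K}. b' i \<in> B_i ns i" using bB rot_Bi step by (auto simp: b'_def)
  have "(?R * ?F) $$ (a,0) = (if a = 0 then complex_of_real (S (m - 1)) else if a = p (blk a) \<and> m \<le> blk a then complex_of_real (r (blk a)) else 0)"
    if a: "a < n" for a
  proof -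
    have "(?R * ?F) $$ (a,0) = (\<Sum>k\<in>{0..<n}. ?R $$ (a,k) * ?F $$ (k,0))"
      using Rc Fc a q by (rule_tac mult_entry) auto
    also have "\<dots> = (if a = 0 then complex_of_real (S (m - 1)) else if a = p (blk a) \<and> m \<le> blk a then complex_of_real (r (blk a)) else 0)"
    proof (cases "a \<noteq> 0 \<and> a \<noteq> p m")
      case True
      have "(\<Sum>k\<in>{0..<n}. ?R $$ (a,k) * ?F $$ (k,0)) = (\<Sum>k\<in>{0..<n}. (if a = k then 1 else 0) * ?F $$ (k,0))"
        using True a by (intro sum.cong) (auto simp: rot_def)
      also have "\<dots> = ?F $$ (a,0)" using sum_delta_l[of a n "\<lambda>k. ?F $$ (k,0)"] a by simp
      also have "\<dots> = (if a = 0 then complex_of_real (S (m - 1)) else if a = p (blk a) \<and> m \<le> blk a then complex_of_real (r (blk a)) else 0)"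
      proof -
        have e: "(a = p (blk a) \<and> Suc m \<le> blk a) = (a = p (blk a) \<and> m \<le> blk a)"
        proof
          assume h: "a = p (blk a) \<and> m \<le> blk a"
          have "blk a \<noteq> m" using h True by auto
          then show "a = p (blk a) \<and> Suc m \<le> blk a" using h by simp
        qed simp
        show ?thesis using bcol a True by (simp only: e) simp
      qed
      finally show ?thesis .
    next
      case False
      have "(\<Sum>k\<in>{0..<n}. ?R $$ (a,k) * ?F $$ (k,0)) = ?R $$ (a,0) * ?F $$ (0,0) + ?R $$ (a,p m) * ?F $$ (p m,0)"
        using False q a by (intro sum_two) (auto simp: rot_def)
      also have "\<dots> = ?R $$ (a,0) * complex_of_real (S m)"
      proof -
        have F0: "?F $$ (0,0) = complex_of_real (S m)" using bcol[rule_format, of 0] q by simp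
        have Fq: "?F $$ (p m,0) = 0" using bcol[rule_format, OF q(2)] q by simp
        show ?thesis by (simp only: F0 Fq) simp
      qed
      also have "\<dots> = (if a = 0 then complex_of_real (S (m - 1)) else if a = p (blk a) \<and> m \<le> blk a then complex_of_real (r (blk a)) else 0)"
      proof -
        have "a = 0 \<or> a = p m" using False by auto
        then show ?thesis
        proof
          assume a0: "a = 0"
          have "?R $$ (0,0) = complex_of_real (cos t)" using q by (simp add: rot_def)
          then show ?thesis using a0 t(1) by (simp flip: of_real_mult)
        next
          assume aq: "a = p m"
          have "?R $$ (p m,0) = complex_of_real (sin t)" using q by (simp add: rot_def)
          then show ?thesis using aq t(2) q by (simp flip: of_real_mult)
        qed
      qed
      finally show ?thesis .
    qed
    finally show ?thesis .
  qed
  then show ?case using b'B F' by (intro exI[of _ b']) auto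
qed

lemma cnj_mult_self: "cnj z * z = complex_of_real ((cmod z)^2)"
  by (metis complex_norm_square mult.commute)

lemma sum_pt: "(q::nat) < n \<Longrightarrow> (\<Sum>c\<in>{0..<n}. if c = q then f c else 0) = f q"
  by simp

lemma dg_mult_entry: assumes "M \<in> carrier_mat n n" "a < n" "c < n"
  shows "(dg ns \<omega> * M) $$ (a,c) = \<omega> (blk a) * M $$ (a,c)"
proof -
  have "(dg ns \<omega> * M) $$ (a,c) = (\<Sum>k\<in>{0..<n}. dg ns \<omega> $$ (a,k) * M $$ (k,c))"
    using assms by (rule_tac mult_entry) (auto simp: dg_def)
  also have "\<dots> = (\<Sum>k\<in>{0..<n}. (if a = k then 1 else 0) * (\<omega> (blk a) * M $$ (k,c)))"
    using assms by (intro sum.cong) (auto simp: dg_def)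
  also have "\<dots> = \<omega> (blk a) * M $$ (a,c)" using sum_delta_l[of a n "\<lambda>k. \<omega> (blk a) * M $$ (k,c)"] assms by simp
  finally show ?thesis .
qed

lemma house: fixes v :: "nat \<Rightarrow> complex"
  defines "R2 \<equiv> \<lambda>j. \<Sum>a\<in>{0..<n}. if blk a = j then (cmod (v a))^2 else 0"
  defines "u \<equiv> \<lambda>a. if a = p (blk a) then complex_of_real (sqrt (R2 (blk a))) else 0"
  shows "\<exists>x\<in>L_group ns. \<forall>a<n. (\<Sum>c\<in>{0..<n}. x $$ (a,c) * u c) = v a"
proof -
  define \<omega> where "\<omega> = (\<lambda>j. if v (p j) = 0 then 1 else v (p j) / complex_of_real (cmod (v (p j))))"
  define v' where "v' = (\<lambda>a. cnj (\<omega> (blk a)) * v a)"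
  define w where "w = (\<lambda>a. u a - v' a)"
  have \<omega>1: "cnj (\<omega> j) * \<omega> j = 1" for j
    by (auto simp: \<omega>_def cnj_mult_self norm_divide power2_eq_square)
  have \<omega>v: "cnj (\<omega> j) * v (p j) = complex_of_real (cmod (v (p j)))" for j
  proof (cases "v (p j) = 0")
    case False
    have "cnj (v (p j)) * v (p j) / complex_of_real (cmod (v (p j))) = complex_of_real (cmod (v (p j)))"
      using False by (simp add: cnj_mult_self power2_eq_square)
    then show ?thesis using False by (simp add: \<omega>_def mult.commute)
  qed (simp add: \<omega>_def)
  have hu: "(\<Sum>c\<in>{0..<n}. hh ns w $$ (a,c) * u c) = v' a" if a: "a < n" for a
  proof -
    define j where "j = blk a"
    define m where "m = cmod (v (p j))"
    define rj where "rj = sqrt (R2 j)"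
    have j: "j < K" "p j < n" "blk (p j) = j" using blk_props a psum_lt_n blk_psum by (auto simp: j_def)
    have R2nn: "R2 j \<ge> 0" unfolding R2_def by (auto intro: sum_nonneg)
    have ublk: "u c = (if c = p j then complex_of_real rj else 0)" if "blk c = j" for c
      using that j by (auto simp: u_def rj_def)
    have wpj: "w (p j) = complex_of_real rj - complex_of_real m"
      using j \<omega>v[of j] by (simp add: w_def v'_def u_def rj_def m_def)
    have D: "(\<Sum>c\<in>{0..<n}. if blk c = j then cnj (w c) * u c else 0) = complex_of_real ((rj - m) * rj)"
    proof -
      have "(\<Sum>c\<in>{0..<n}. if blk c = j then cnj (w c) * u c else 0) = (\<Sum>c\<in>{0..<n}. if c = p j then complex_of_real ((rj - m) * rj) else 0)"
        using j by (intro sum.cong) (auto simp: ublk wpj)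
      then show ?thesis using j by simp
    qed
    have Nw: "Nb ns w j = complex_of_real (\<Sum>c\<in>{0..<n}. if blk c = j then (cmod (w c))^2 else 0)"
      unfolding Nb_def by (simp add: cnj_mult_self if_distrib cong: if_cong)
    have N: "Nb ns w j = complex_of_real (2 * rj^2 - 2 * rj * m)"
    proof -
      have "Nb ns w j = (\<Sum>c\<in>{0..<n}. (if blk c = j then complex_of_real ((cmod (v c))^2) else 0)
           + (if c = p j then complex_of_real ((rj - m)^2 - m^2) else 0))"
        unfolding Nb_def
      proof (intro sum.cong refl)
        fix c assume "c \<in> {0..<n}"
        show "(if blk c = j then cnj (w c) * w c else 0) = (if blk c = j then complex_of_real ((cmod (v c))^2) else 0)
           + (if c = p j then complex_of_real ((rj - m)^2 - m^2) else 0)"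
        proof (cases "c = p j")
          case True
          then show ?thesis using j wpj by (simp add: m_def cnj_mult_self power2_eq_square flip: of_real_diff of_real_mult of_real_add of_real_power)
        next
          case False
          have "cnj (w c) * w c = complex_of_real ((cmod (v c))^2)" if "blk c = j"
          proof -
            have "w c = - v' c" using that False by (simp add: w_def ublk)
            then have "cnj (w c) * w c = (cnj (\<omega> (blk c)) * \<omega> (blk c)) * (cnj (v c) * v c)"
              by (simp add: v'_def algebra_simps)
            also have "\<dots> = cnj (v c) * v c" by (simp only: \<omega>1 mult_1_left)
            also have "\<dots> = complex_of_real ((cmod (v c))^2)" by (rule cnj_mult_self)
            finally show ?thesis .
          qed
          then show ?thesis using False by auto
        qed
      qed
      also have "\<dots> = complex_of_real (R2 j) + complex_of_real ((rj - m)^2 - m^2)"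
      proof -
        have s1: "(\<Sum>c\<in>{0..<n}. if blk c = j then complex_of_real ((cmod (v c))^2) else 0) = complex_of_real (R2 j)"
          unfolding R2_def of_real_sum by (intro sum.cong) auto
        have s2: "(\<Sum>c\<in>{0..<n}. if c = p j then complex_of_real ((rj - m)^2 - m^2) else 0) = complex_of_real ((rj - m)^2 - m^2)"
          using j by (simp only: sum_pt)
        show ?thesis by (simp only: sum.distrib s1 s2)
      qed
      also have "\<dots> = complex_of_real (2 * rj^2 - 2 * rj * m)"
        using R2nn by (simp add: rj_def power2_eq_square algebra_simps flip: of_real_add)
      finally show ?thesis .
    qed
    have "(\<Sum>c\<in>{0..<n}. hh ns w $$ (a,c) * u c) = (\<Sum>c\<in>{0..<n}. (if a = c then 1 else 0) * u c - Qm ns w a c * u c)"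
      using a by (intro sum.cong) (auto simp: hh_def algebra_simps)
    also have "\<dots> = u a - (\<Sum>c\<in>{0..<n}. Qm ns w a c * u c)"
      using a by (simp add: sum_subtractf sum_delta_l)
    also have "\<dots> = v' a"
    proof (cases "Nb ns w j = 0")
      case True
      have "(\<Sum>c\<in>{0..<n}. if blk c = j then (cmod (w c))^2 else 0) = 0" using True unfolding Nw by (simp only: of_real_eq_0_iff)
      then have "(if blk a = j then (cmod (w a))^2 else 0) = 0"
        using a by (subst (asm) sum_nonneg_eq_0_iff) auto
      then have "w a = 0" by (simp add: j_def)
      moreover have "(\<Sum>c\<in>{0..<n}. Qm ns w a c * u c) = 0" using True by (simp add: Qm_def j_def)
      ultimately show ?thesis by (simp add: w_def)
    next
      case False
      have "(\<Sum>c\<in>{0..<n}. Qm ns w a c * u c) = (\<Sum>c\<in>{0..<n}. (2 * w a / Nb ns w j) * (if blk c = j then cnj (w c) * u c else 0))"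
        using False by (intro sum.cong) (auto simp: Qm_def j_def)
      also have "\<dots> = (2 * w a / Nb ns w j) * complex_of_real ((rj - m) * rj)"
        by (simp only: sum_distrib_left[symmetric] D)
      also have "\<dots> = w a"
      proof -
        have e: "Nb ns w j = 2 * complex_of_real ((rj - m) * rj)"
          unfolding N by (simp add: algebra_simps power2_eq_square)
        show ?thesis using False unfolding e by (simp add: field_simps)
      qed
      finally show ?thesis by (simp add: w_def)
    qed
    finally show ?thesis .
  qed
  define x where "x = dg ns \<omega> * hh ns w"
  have xL: "x \<in> L_group ns" unfolding x_def using dg_L[OF \<omega>1] hh_L by (rule L_mult)
  have "(\<Sum>c\<in>{0..<n}. x $$ (a,c) * u c) = v a" if a: "a < n" for a
  proof -
    have "(\<Sum>c\<in>{0..<n}. x $$ (a,c) * u c) = (\<Sum>c\<in>{0..<n}. \<omega> (blk a) * (hh ns w $$ (a,c) * u c))"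
    proof (intro sum.cong refl)
      fix c assume "c \<in> {0..<n}"
      have "hh ns w \<in> carrier_mat n n" by (simp add: hh_def)
      then show "x $$ (a,c) * u c = \<omega> (blk a) * (hh ns w $$ (a,c) * u c)"
        using a \<open>c \<in> {0..<n}\<close> by (simp add: x_def dg_mult_entry)
    qed
    also have "\<dots> = \<omega> (blk a) * v' a" using hu a by (simp add: sum_distrib_left[symmetric])
    also have "\<dots> = v a" by (simp add: v'_def mult.assoc[symmetric] \<omega>1 mult.commute[of "\<omega> _"])
    finally show ?thesis .
  qed
  then show ?thesis using xL by blast
qed

lemma ctmult_entry: assumes "A \<in> carrier_mat n n" "B \<in> carrier_mat n n" "i < n" "j < n"
  shows "(conj_transpose A * B) $$ (i,j) = (\<Sum>k\<in>{0..<n}. cnj (A $$ (k,i)) * B $$ (k,j))"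
proof -
  have "(conj_transpose A * B) $$ (i,j) = (\<Sum>k\<in>{0..<n}. conj_transpose A $$ (i,k) * B $$ (k,j))"
    using assms by (rule_tac mult_entry) auto
  also have "\<dots> = (\<Sum>k\<in>{0..<n}. cnj (A $$ (k,i)) * B $$ (k,j))" using assms by (intro sum.cong) auto
  finally show ?thesis .
qed

lemma main_sub: assumes g: "g \<in> unitary_group n"
  shows "\<exists>x b h. g = x * b * h \<and> x \<in> L_group ns \<and> b \<in> B_set ns \<and> h \<in> H_group n"
proof -
  have gc: "g \<in> carrier_mat n n" using g by (rule unitary_carrier)
  have gl: "conj_transpose g * g = 1\<^sub>m n" using g by (rule unitary_left)
  have n0: "0 < n" using psum_lt_n[of 0] ne by auto
  define v where "v = (\<lambda>a. g $$ (a,0))"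
  define R2 where "R2 = (\<lambda>j. \<Sum>a\<in>{0..<n}. if blk a = j then (cmod (v a))^2 else 0)"
  define u where "u = (\<lambda>a. if a = p (blk a) then complex_of_real (sqrt (R2 (blk a))) else 0)"
  define r where "r = (\<lambda>j. sqrt (R2 j))"
  have R2nn: "R2 j \<ge> 0" for j unfolding R2_def by (auto intro: sum_nonneg)
  have rpos: "r j \<ge> 0" for j unfolding r_def using R2nn by simp
  have vs: "(\<Sum>a\<in>{0..<n}. (cmod (v a))^2) = 1"
  proof -
    have "complex_of_real (\<Sum>a\<in>{0..<n}. (cmod (v a))^2) = (\<Sum>a\<in>{0..<n}. cnj (g $$ (a,0)) * g $$ (a,0))"
      by (simp add: of_real_sum cnj_mult_self v_def)
    also have "\<dots> = (conj_transpose g * g) $$ (0,0)" by (rule ctmult_entry[OF gc gc n0 n0, symmetric])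
    also have "\<dots> = 1" using gl n0 by simp
    finally show ?thesis by (metis of_real_eq_1_iff)
  qed
  have rsum: "(\<Sum>j<K. r j ^ 2) = 1"
  proof -
    have "(\<Sum>j<K. r j ^ 2) = (\<Sum>j<K. R2 j)" using R2nn by (simp add: r_def)
    also have "\<dots> = (\<Sum>a\<in>{0..<n}. \<Sum>j<K. if blk a = j then (cmod (v a))^2 else 0)"
      unfolding R2_def by (rule sum.swap)
    also have "\<dots> = (\<Sum>a\<in>{0..<n}. (cmod (v a))^2)"
      using blk_props(1) by (intro sum.cong) auto
    finally show ?thesis using vs by simp
  qed
  obtain bf where bfB: "\<forall>i\<in>{1..<K}. bf i \<in> B_i ns i" and
    bcol: "\<forall>a<n. foldr (\<lambda>i acc. bf i * acc) [1..<K] (1\<^sub>m n) $$ (a,0) =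
     (if a = 0 then complex_of_real (sqrt (\<Sum>j\<le>1 - 1. r j ^ 2)) else if a = p (blk a) \<and> 1 \<le> blk a then complex_of_real (r (blk a)) else 0)"
    using B_col[OF rpos rsum, of 1] ne by (cases ns) auto
  define b where "b = foldr (\<lambda>i acc. bf i * acc) [1..<K] (1\<^sub>m n)"
  have bB: "b \<in> B_set ns" unfolding b_def B_set_def using bfB by blast
  have bu: "b $$ (c,0) = u c" if c: "c < n" for c
  proof (cases "c = 0")
    case True
    then show ?thesis using bcol n0 rpos[of 0] by (simp add: b_def u_def r_def)
  next
    case False
    have "c = p (blk c) \<Longrightarrow> 1 \<le> blk c" using False by (cases "blk c") auto
    then show ?thesis using bcol c False by (auto simp: b_def u_def r_def)
  qed
  obtain x where xL: "x \<in> L_group ns" and xu: "\<forall>a<n. (\<Sum>c\<in>{0..<n}. x $$ (a,c) * u c) = v a"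
    using house[of v] unfolding R2_def u_def by blast
  define y where "y = x * b"
  have xU: "x \<in> unitary_group n" using xL by (rule L_unitary)
  have bU: "b \<in> unitary_group n" using bB by (rule B_unitary)
  have yU: "y \<in> unitary_group n" unfolding y_def using xU bU by (rule unitary_mult)
  have xc: "x \<in> carrier_mat n n" using xU by (rule unitary_carrier)
  have bc: "b \<in> carrier_mat n n" using bU by (rule unitary_carrier)
  have yc: "y \<in> carrier_mat n n" using yU by (rule unitary_carrier)
  have ycol: "y $$ (a,0) = g $$ (a,0)" if a: "a < n" for a
  proof -
    have "y $$ (a,0) = (\<Sum>c\<in>{0..<n}. x $$ (a,c) * b $$ (c,0))"
      unfolding y_def using xc bc a n0 by (rule mult_entry)
    also have "\<dots> = (\<Sum>c\<in>{0..<n}. x $$ (a,c) * u c)" by (intro sum.cong) (auto simp: bu)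
    also have "\<dots> = g $$ (a,0)" using xu a by (simp add: v_def)
    finally show ?thesis .
  qed
  define h where "h = conj_transpose y * g"
  have hU: "h \<in> unitary_group n" unfolding h_def using unitary_ct[OF yU] g by (rule unitary_mult)
  have hH: "h \<in> H_group n"
  proof -
    have "h $$ (0,c) = 0 \<and> h $$ (c,0) = 0" if c: "c < n" "0 < c" for c
    proof
      have "h $$ (0,c) = (\<Sum>k\<in>{0..<n}. cnj (y $$ (k,0)) * g $$ (k,c))"
        unfolding h_def using yc gc n0 c by (rule_tac ctmult_entry) auto
      also have "\<dots> = (\<Sum>k\<in>{0..<n}. cnj (g $$ (k,0)) * g $$ (k,c))" by (intro sum.cong) (auto simp: ycol)
      also have "\<dots> = (conj_transpose g * g) $$ (0,c)" by (rule ctmult_entry[OF gc gc n0 c(1), symmetric])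
      also have "\<dots> = 0" using gl n0 c by simp
      finally show "h $$ (0,c) = 0" .
    next
      have yl: "conj_transpose y * y = 1\<^sub>m n" using yU by (rule unitary_left)
      have "h $$ (c,0) = (\<Sum>k\<in>{0..<n}. cnj (y $$ (k,c)) * g $$ (k,0))"
        unfolding h_def using yc gc n0 c by (rule_tac ctmult_entry) auto
      also have "\<dots> = (\<Sum>k\<in>{0..<n}. cnj (y $$ (k,c)) * y $$ (k,0))" by (intro sum.cong) (auto simp: ycol)
      also have "\<dots> = (conj_transpose y * y) $$ (c,0)" by (rule ctmult_entry[OF yc yc c(1) n0, symmetric])
      also have "\<dots> = 0" using yl n0 c by simp
      finally show "h $$ (c,0) = 0" .
    qed
    then show ?thesis using hU by (auto simp: H_group_def)
  qed
  have "x * b * h = g"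
  proof -
    have cyc: "conj_transpose y \<in> carrier_mat n n" using yc by simp
    have "x * b * h = y * (conj_transpose y * g)" by (simp add: y_def h_def)
    also have "\<dots> = (y * conj_transpose y) * g" using yc cyc gc by (rule assoc_mult_mat[symmetric])
    also have "\<dots> = g" using yU gc by (simp add: unitary_group_def)
    finally show ?thesis .
  qed
  then show ?thesis using xL bB hH by metis
qed

end

theorem theorem5p1:
  fixes ns :: "nat list"
  assumes "ns \<noteq> []"
    and "\<forall>m \<in> set ns. 0 < m"
  shows "unitary_group (sum_list ns) =
    {x * b * h | x b h. x \<in> L_group ns \<and> b \<in> B_set ns \<and> h \<in> H_group (sum_list ns)}"
proof -
  interpret part ns using assms by unfold_locales
  show ?thesis
  proof (intro equalityI subsetI)
    fix g assume "g \<in> unitary_group (sum_list ns)"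
    then show "g \<in> {x * b * h | x b h. x \<in> L_group ns \<and> b \<in> B_set ns \<and> h \<in> H_group (sum_list ns)}"
      using main_sub by blast
  next
    fix g assume "g \<in> {x * b * h | x b h. x \<in> L_group ns \<and> b \<in> B_set ns \<and> h \<in> H_group (sum_list ns)}"
    then obtain x b h where "g = x * b * h" "x \<in> L_group ns" "b \<in> B_set ns" "h \<in> H_group (sum_list ns)" by blast
    then show "g \<in> unitary_group (sum_list ns)"
      using L_unitary B_unitary unitary_mult by (auto simp: H_group_def)
  qed
qed

end
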